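(* For every real $\theta>1$, the set $\mathcal A_\theta$ has density $0$, i.e. $\lim_{N\to\infty}\frac{|\mathcal A_\theta\cap[1,N]|}{N}=0$.
   Context: $\lfloor x\rfloor$ is the floor of $x$; $\log$ is the natural logarithm. For real $\theta>1$ and positive integer $n$, $M'_\theta(n)=\left\lfloor 1/(\theta^{1/n}-1)\right\rfloor$, and $\mathcal A_\theta=\{n\in\mathbb N: M'_\theta(n)\neq \lfloor n/\log\theta-1/2\rfloor\}$, where $\mathbb N$ is the set of positive integers. *)

theory Defs
  imports Complex_Main
begin

definition M' :: "real \<Rightarrow> nat \<Rightarrow> int" where
  "M' \<theta> n = \<lfloor>1 / (\<theta> powr (1 / real n) - 1)\<rfloor>"

definition A_set :: "real \<Rightarrow> nat set" where
  "A_set \<theta> = {n. n \<ge> 1 \<and> M' \<theta> n \<noteq> \<lfloor>real n / ln \<theta> - 1/2\<rfloor>}"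

end

theory Submission imports Defs begin

lemma exp_lower_aux:
  fixes x :: real assumes "0 < x" "x < 2"
  shows "(2 - x) * exp x < 2 + x"
proof -
  let ?f = "\<lambda>y::real. (2 - y) * exp y - (2 + y)"
  have "?f 0 > ?f x"
  proof (rule DERIV_neg_imp_decreasing_open[of 0 x])
    show "0 < x" by fact
    fix y :: real assume y: "0 < y" "y < x"
    have d: "DERIV ?f y :> ((-1) * exp y + (2 - y) * exp y - 1)"
      by (auto intro!: derivative_eq_intros)
    have "1 - y < exp (-y)" using exp_minus_greater[of y] y by simp
    hence "(1 - y) * exp y < exp (-y) * exp y" by simp
    also have "\<dots> = 1" by (simp add: exp_minus field_simps)
    finally have "(-1) * exp y + (2 - y) * exp y - 1 < 0" by (simp add: algebra_simps)
    thus "\<exists>z. DERIV ?f y :> z \<and> z < 0" using d by blast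
  next
    show "continuous_on {0..x} ?f" by (intro continuous_intros)
  qed
  thus ?thesis by simp
qed

lemma exp_bounds:
  fixes x :: real assumes "0 < x" "x < 2"
  shows "1/x - 1/2 < 1/(exp x - 1)" "1/(exp x - 1) \<le> 1/x - 1/2 + x"
proof -
  have e1: "exp x - 1 > 0" using assms by simp
  have "(2 - x) * exp x < 2 + x" by (rule exp_lower_aux[OF assms])
  hence "(2 - x) * (exp x - 1) < 2 * x" by (simp add: algebra_simps)
  hence "(2 - x) / (2 * x) < 1 / (exp x - 1)" using e1 assms
    by (simp add: field_simps)
  moreover have "(2 - x) / (2 * x) = 1/x - 1/2" using assms by (simp add: field_simps)
  ultimately show "1/x - 1/2 < 1/(exp x - 1)" by simp
  have q: "1 + x + x^2/2 \<le> exp x" using exp_lower_Taylor_quadratic[of x] assms by simp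
  have "x^2/2 \<ge> 0" by simp
  hence p: "x + x^2/2 > 0" using assms by linarith
  have "1/(exp x - 1) \<le> 1/(x + x^2/2)"
    using q p by (intro frac_le) auto
  also have "\<dots> \<le> 1/x - 1/2 + x"
  proof -
    have e: "(1/x - 1/2 + x)*(x + x^2/2) = 1 + 3*x^2/4 + x^3/2"
      using assms by (simp add: field_simps power2_eq_square power3_eq_cube)
    have "x^3/2 \<ge> 0" "3*x^2/4 \<ge> 0" using assms by simp_all
    hence "1 \<le> (1/x - 1/2 + x)*(x + x^2/2)" using e by linarith
    thus ?thesis using p by (simp add: divide_le_eq)
  qed
  finally show "1/(exp x - 1) \<le> 1/x - 1/2 + x" .
qed


lemma key_P:
  assumes th: "\<theta> > 1" and nA: "n \<in> A_set \<theta>" and nL: "real n > ln \<theta>"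
  shows "\<exists>k::int. 0 < k - (real n / ln \<theta> - 1/2) \<and> k - (real n / ln \<theta> - 1/2) \<le> ln \<theta> / real n"
proof -
  define L where "L = ln \<theta>"
  have L0: "L > 0" using th by (simp add: L_def)
  have n0: "real n > 0" using nL L0 L_def by linarith
  define x where "x = L / real n"
  have x0: "0 < x" using L0 n0 by (simp add: x_def)
  have x1: "x < 1" using nL n0 by (simp add: x_def L_def)
  have pw: "\<theta> powr (1 / real n) = exp x"
    using th by (simp add: powr_def x_def L_def)
  have ix: "1 / x = real n / L" by (simp add: x_def)
  define u where "u = real n / L - 1/2"
  define v where "v = 1 / (exp x - 1)"
  have uv: "u < v" "v \<le> u + x" using exp_bounds[of x] x0 x1 ix by (auto simp: u_def v_def)
  have "\<lfloor>v\<rfloor> \<noteq> \<lfloor>u\<rfloor>" using nA pw by (simp add: A_set_def M'_def v_def u_def L_def)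
  moreover have "\<lfloor>u\<rfloor> \<le> \<lfloor>v\<rfloor>" using uv by (intro floor_mono) simp
  ultimately have "\<lfloor>u\<rfloor> + 1 \<le> \<lfloor>v\<rfloor>" by simp
  hence "real_of_int (\<lfloor>u\<rfloor> + 1) \<le> real_of_int \<lfloor>v\<rfloor>" by (simp only: of_int_le_iff)
  hence "u < real_of_int \<lfloor>v\<rfloor>" using real_of_int_floor_add_one_gt[of u] by linarith
  moreover have "real_of_int \<lfloor>v\<rfloor> \<le> v" by simp
  ultimately have "0 < real_of_int \<lfloor>v\<rfloor> - u \<and> real_of_int \<lfloor>v\<rfloor> - u \<le> x" using uv by linarith
  thus ?thesis unfolding u_def x_def L_def by blast
qed

lemma density_from_bounds:
  fixes f :: "nat \<Rightarrow> real"
  assumes nn: "\<And>N. f N \<ge> 0"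
    and b: "\<And>D::nat. D \<ge> 1 \<Longrightarrow> \<exists>C. \<forall>N. f N \<le> C + real N / real D"
  shows "(\<lambda>N. f N / real N) \<longlonglongrightarrow> 0"
proof (rule LIMSEQ_I)
  fix r :: real assume r: "0 < r"
  define D where "D = nat \<lceil>2 / r\<rceil> + 1"
  have D1: "D \<ge> 1" by (simp add: D_def)
  have "real D > 2 / r" unfolding D_def by linarith
  hence "2 < real D * r" using r by (simp add: divide_less_eq)
  hence Dr: "1 / real D < r / 2" using r D1 by (simp add: field_simps)
  obtain C where C: "\<And>N. f N \<le> C + real N / real D" using b[OF D1] by blast
  define N0 where "N0 = nat \<lceil>2 * \<bar>C\<bar> / r\<rceil> + 1"
  show "\<exists>no. \<forall>n\<ge>no. norm (f n / real n - 0) < r"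
  proof (intro exI allI impI)
    fix n assume n: "n \<ge> N0"
    have n0: "real n > 0" using n by (simp add: N0_def)
    have "real n > 2 * \<bar>C\<bar> / r" using n unfolding N0_def by linarith
    hence nC: "\<bar>C\<bar> / real n < r / 2" using r n0
      by (simp add: field_simps)
    have "f n / real n \<le> (C + real n / real D) / real n"
      using C n0 by (simp add: divide_right_mono)
    also have "\<dots> = C / real n + 1 / real D" using n0 by (simp add: field_simps)
    also have "\<dots> < r"
    proof -
      have "C / real n \<le> \<bar>C\<bar> / real n" using n0 by (simp add: divide_right_mono)
      thus ?thesis using nC Dr by linarith
    qed
    finally show "norm (f n / real n - 0) < r" using nn[of n] n0 by simp
  qed
qed


lemma card_spaced:
  fixes S :: "nat set"
  assumes D: "D \<ge> 1"
    and sp: "\<And>n1 n2. n1 \<in> S \<Longrightarrow> n2 \<in> S \<Longrightarrow> N0 \<le> n1 \<Longrightarrow> n1 < n2 \<Longrightarrow> n1 + D \<le> n2"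
  shows "real (card (S \<inter> {1..N})) \<le> real N0 + 1 + real N / real D"
proof -
  define T where "T = S \<inter> {N0..N}"
  have sub: "S \<inter> {1..N} \<subseteq> {..<N0} \<union> T" by (auto simp: T_def)
  have "card (S \<inter> {1..N}) \<le> card ({..<N0} \<union> T)"
    by (rule card_mono[OF _ sub]) (simp add: T_def)
  also have "\<dots> \<le> card {..<N0} + card T" by (rule card_Un_le)
  finally have c1: "card (S \<inter> {1..N}) \<le> N0 + card T" by simp
  have less: "n1 div D < n2 div D" if "n1 \<in> T" "n2 \<in> T" "n1 < n2" for n1 n2
  proof -
    have "n1 + D \<le> n2" using sp that by (auto simp: T_def)
    hence "(n1 + D) div D \<le> n2 div D" by (rule div_le_mono)
    moreover have "(n1 + D) div D = n1 div D + 1" using D by simp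
    ultimately show ?thesis by simp
  qed
  have inj: "inj_on (\<lambda>n. n div D) T"
  proof (rule inj_onI)
    fix a b assume ab: "a \<in> T" "b \<in> T" "a div D = b div D"
    show "a = b"
    proof (rule ccontr)
      assume "a \<noteq> b"
      hence "a < b \<or> b < a" by auto
      thus False using less[of a b] less[of b a] ab by auto
    qed
  qed
  have "(\<lambda>n. n div D) ` T \<subseteq> {..N div D}" by (auto simp: T_def intro: div_le_mono)
  hence "card ((\<lambda>n. n div D) ` T) \<le> card {..N div D}" by (intro card_mono) auto
  hence "card T \<le> N div D + 1" using card_image[OF inj] by simp
  with c1 have "card (S \<inter> {1..N}) \<le> N0 + N div D + 1" by simp
  hence "real (card (S \<inter> {1..N})) \<le> real N0 + real (N div D) + 1"
    by (metis of_nat_add of_nat_le_iff of_nat_1)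
  also have "real (N div D) \<le> real N / real D" by (rule of_nat_div_le_of_nat)
  finally show ?thesis by simp
qed

theorem theorem3:
  fixes \<theta> :: real
  assumes "\<theta> > 1"
  shows "(\<lambda>N. real (card (A_set \<theta> \<inter> {1..N})) / real N) \<longlonglongrightarrow> 0"
proof (rule density_from_bounds)
  fix N show "real (card (A_set \<theta> \<inter> {1..N})) \<ge> 0" by simp
next
  fix D :: nat assume D: "D \<ge> 1"
  define L where "L = ln \<theta>"
  have L0: "L > 0" using assms by (simp add: L_def)
  define S where "S = A_set \<theta>"
  have P: "\<exists>k::int. 0 < k - (real n / L - 1/2) \<and> k - (real n / L - 1/2) \<le> L / real n"
    if "n \<in> S" "real n > L" for n
    using key_P[OF assms, of n] that by (simp add: S_def L_def)
  show "\<exists>C. \<forall>N. real (card (A_set \<theta> \<inter> {1..N})) \<le> C + real N / real D"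
  proof (cases "\<exists>q::nat. q \<ge> 1 \<and> (\<exists>p::int. real q / L = real_of_int p)")
    case True
    then obtain q :: nat and p :: int where q1: "q \<ge> 1" and qp: "real q / L = real_of_int p" by blast
    define N0 where "N0 = nat \<lceil>L * real q + L\<rceil> + 1"
    have big: "real n > L" "L / real n < 1 / real q" if "n \<ge> N0" for n
    proof -
      have "real n > L * real q + L" using that unfolding N0_def by linarith
      moreover have "L * real q \<ge> 0" using L0 by simp
      ultimately show "real n > L" by linarith
      have "L * real q < real n" using \<open>real n > L * real q + L\<close> L0 by linarith
      thus "L / real n < 1 / real q" using q1 L0 \<open>real n > L\<close>
        by (simp add: field_simps)
    qed
    have same: "k1 - (real n1 / L - 1/2) = k2 - (real n2 / L - 1/2)"
      if h1: "0 < k1 - (real n1 / L - 1/2)" "k1 - (real n1 / L - 1/2) \<le> L / real n1"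
      and h2: "0 < k2 - (real n2 / L - 1/2)" "k2 - (real n2 / L - 1/2) \<le> L / real n2"
      and n: "n1 \<ge> N0" "n2 \<ge> N0" for n1 n2 :: nat and k1 k2 :: int
    proof -
      define t1 where "t1 = k1 - (real n1 / L - 1/2)"
      define t2 where "t2 = k2 - (real n2 / L - 1/2)"
      have t1: "0 < t1" "t1 < 1 / real q" using h1 big(2)[OF n(1)] by (auto simp: t1_def)
      have t2: "0 < t2" "t2 < 1 / real q" using h2 big(2)[OF n(2)] by (auto simp: t2_def)
      define z :: int where "z = int q * (k1 - k2) - (int n1 - int n2) * p"
      have "real n1 / L * real q = real n1 * (real q / L)" by simp
      have zq: "real_of_int z = real q * (t1 - t2)"
      proof -
        have "real q * (t1 - t2) = real q * (k1 - k2) - (real n1 * (real q / L) - real n2 * (real q / L))"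
          unfolding t1_def t2_def by (simp add: algebra_simps)
        also have "\<dots> = real_of_int z" unfolding qp z_def by (simp add: algebra_simps)
        finally show ?thesis by simp
      qed
      have "real q * t1 < 1" "real q * t2 < 1" using t1 t2 q1 by (simp_all add: field_simps)
      moreover have "real q * t1 > 0" "real q * t2 > 0" using t1 t2 q1 by simp_all
      ultimately have "\<bar>real_of_int z\<bar> < 1" unfolding zq by (simp add: algebra_simps abs_less_iff)
      hence "z = 0" by linarith
      hence "t1 = t2" using zq q1 by simp
      thus ?thesis by (simp add: t1_def t2_def)
    qed
    have finS: "finite S"
    proof (cases "\<exists>n1\<in>S. n1 \<ge> N0")
      case False
      hence "S \<subseteq> {..<N0}" by auto
      thus ?thesis using finite_subset by blast
    next
      case True
      then obtain n1 where n1: "n1 \<in> S" "n1 \<ge> N0" by blast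
      obtain k1 :: int where k1: "0 < k1 - (real n1 / L - 1/2)" "k1 - (real n1 / L - 1/2) \<le> L / real n1"
        using P[OF n1(1) big(1)[OF n1(2)]] by blast
      define t where "t = k1 - (real n1 / L - 1/2)"
      have "S \<subseteq> {..max N0 (nat \<lceil>L / t\<rceil>)}"
      proof
        fix n2 assume n2: "n2 \<in> S"
        show "n2 \<in> {..max N0 (nat \<lceil>L / t\<rceil>)}"
        proof (cases "n2 \<ge> N0")
          case False thus ?thesis by simp
        next
          case True
          obtain k2 :: int where k2: "0 < k2 - (real n2 / L - 1/2)" "k2 - (real n2 / L - 1/2) \<le> L / real n2"
            using P[OF n2 big(1)[OF True]] by blast
          have "t = k2 - (real n2 / L - 1/2)" using same[OF k1 k2 n1(2) True] by (simp add: t_def)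
          hence "t \<le> L / real n2" using k2 by simp
          moreover have "t > 0" using k1 by (simp add: t_def)
          moreover have "real n2 > 0" using big(1)[OF True] L0 by linarith
          ultimately have "real n2 \<le> L / t" by (simp add: field_simps)
          hence "n2 \<le> nat \<lceil>L / t\<rceil>" by linarith
          thus ?thesis by simp
        qed
      qed
      thus ?thesis using finite_subset by blast
    qed
    show ?thesis
    proof (intro exI allI)
      fix N
      have "card (A_set \<theta> \<inter> {1..N}) \<le> card S" unfolding S_def
        using finS by (intro card_mono) (auto simp: S_def)
      moreover have "real N / real D \<ge> 0" by simp
      ultimately show "real (card (A_set \<theta> \<inter> {1..N})) \<le> real (card S) + real N / real D"
        by linarith
    qed
  next
    case False
    hence irr: "real d / L \<notin> \<int>" if "d \<ge> 1" for d :: nat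
      using that by (auto elim!: Ints_cases)
    define g where "g = (\<lambda>d::nat. min (frac (real d / L)) (1 - frac (real d / L)))"
    define \<eta> where "\<eta> = Min (g ` {1..D})"
    have \<eta>0: "\<eta> > 0" unfolding \<eta>_def
    proof (subst Min_gr_iff)
      show "finite (g ` {1..D})" by simp
      show "g ` {1..D} \<noteq> {}" using D by simp
      show "\<forall>a\<in>g ` {1..D}. 0 < a"
      proof
        fix a assume "a \<in> g ` {1..D}"
        then obtain d where d: "d \<in> {1..D}" "a = g d" by auto
        have "frac (real d / L) \<noteq> 0" using irr[of d] d by simp
        hence "frac (real d / L) > 0" using frac_ge_0[of "real d / L"] by linarith
        thus "0 < a" using d frac_lt_1[of "real d / L"] by (simp add: g_def)
      qed
    qed
    have dist: "\<eta> \<le> \<bar>real d / L - real_of_int k\<bar>" if "d \<in> {1..D}" for d k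
    proof -
      have "\<eta> \<le> g d" unfolding \<eta>_def using that by (intro Min_le) auto
      moreover have "g d \<le> \<bar>real d / L - real_of_int k\<bar>"
      proof (cases "k \<le> \<lfloor>real d / L\<rfloor>")
        case True
        hence "real_of_int k \<le> real_of_int \<lfloor>real d / L\<rfloor>" by (simp only: of_int_le_iff)
        thus ?thesis unfolding g_def frac_def by linarith
      next
        case False
        hence "real_of_int (\<lfloor>real d / L\<rfloor> + 1) \<le> real_of_int k" by (simp only: of_int_le_iff)
        thus ?thesis unfolding g_def frac_def by simp
      qed
      ultimately show ?thesis by linarith
    qed
    define N0 where "N0 = nat \<lceil>L / \<eta> + L\<rceil> + 1"
    have big: "real n > L" "L / real n < \<eta>" if "n \<ge> N0" for n
    proof -
      have "real n > L / \<eta> + L" using that unfolding N0_def by linarith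
      moreover have "L / \<eta> \<ge> 0" using L0 \<eta>0 by simp
      ultimately show "real n > L" by linarith
      have "L / \<eta> < real n" using \<open>real n > L / \<eta> + L\<close> L0 by linarith
      thus "L / real n < \<eta>" using \<eta>0 L0 \<open>real n > L\<close>
        by (simp add: field_simps)
    qed
    have sp: "n1 + D \<le> n2" if h: "n1 \<in> S" "n2 \<in> S" "N0 \<le> n1" "n1 < n2" for n1 n2
    proof (rule ccontr)
      assume "\<not> n1 + D \<le> n2"
      hence dD: "n2 - n1 \<in> {1..D}" using h(4) by auto
      have n2N: "N0 \<le> n2" using h by simp
      obtain k1 :: int where k1: "0 < k1 - (real n1 / L - 1/2)" "k1 - (real n1 / L - 1/2) \<le> L / real n1"
        using P[OF h(1) big(1)[OF h(3)]] by blast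
      obtain k2 :: int where k2: "0 < k2 - (real n2 / L - 1/2)" "k2 - (real n2 / L - 1/2) \<le> L / real n2"
        using P[OF h(2) big(1)[OF n2N]] by blast
      have e1: "k1 - (real n1 / L - 1/2) < \<eta>" using k1 big(2)[OF h(3)] by linarith
      have e2: "k2 - (real n2 / L - 1/2) < \<eta>" using k2 big(2)[OF n2N] by linarith
      have "real (n2 - n1) / L = real n2 / L - real n1 / L"
        using h(4) by (simp add: of_nat_diff diff_divide_distrib)
      hence "\<bar>real (n2 - n1) / L - real_of_int (k2 - k1)\<bar> < \<eta>"
        using k1 k2 e1 e2 by (simp add: abs_less_iff)
      thus False using dist[OF dD, of "k2 - k1"] by linarith
    qed
    show ?thesis
    proof (intro exI allI)
      fix N
      show "real (card (A_set \<theta> \<inter> {1..N})) \<le> (real N0 + 1) + real N / real D"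
        using card_spaced[OF D, of S N0 N] sp by (simp add: S_def)
    qed
  qed
qed

end
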